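(* Let $K\ge d>0$, $T\ge 2$. Let $(x,s)$ and $(\tilde x,\tilde s)$ be distributed according to two ARPLN-ICA models with a single regime ($C=1$), i.e. $s_1\sim\mathcal{N}(m,\Phi)$ and, conditionally on $s_1,\dots,s_t$, $s_{t+1}\sim\mathcal{N}(Bs_t+b,\Psi)$, with $B\in\mathbb{R}^{d\times d}$ diagonal, $b,m\in\mathbb{R}^d$, and $\Phi,\Psi$ diagonal with positive diagonal entries; and, conditionally on $s$, the entries $x_t^{(k)}$ are independent with $x_t^{(k)}\sim\mathcal{P}(\exp((\Gamma s_t)^{(k)}))$ (similarly for the tilde model with parameters $\tilde m,\tilde\Phi,\tilde B,\tilde b,\tilde\Psi,\tilde\Gamma$). Assume $\Gamma,\tilde\Gamma\in\mathbb{R}^{K\times d}$ have rank $d$ and that $B$ and $\tilde B$ have non-zero, pairwise distinct diagonal entries. If $x$ and $\tilde x$ have the same distribution, then there exist a permutation matrix $P$ and an invertible diagonal matrix $D$ such that $\tilde\Gamma=\Gamma P D^{-1}$.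
   Context: $\mathcal{P}$ denotes the Poisson distribution; $\mathcal{N}(\mu,\Sigma)$ the Gaussian distribution. Diagonal covariances mean the $d$ coordinates of the latent process evolve independently. *)

theory Defs
  imports "HOL-Analysis.Analysis" "HOL-Probability.Probability"
begin

definition is_diag :: "real^'d^'d \<Rightarrow> bool" where
  "is_diag A \<longleftrightarrow> (\<forall>i j. i \<noteq> j \<longrightarrow> A $ i $ j = 0)"

definition is_perm_matrix :: "real^'d^'d \<Rightarrow> bool" where
  "is_perm_matrix P \<longleftrightarrow> (\<exists>p. p permutes (UNIV :: 'd set) \<and>
      P = (\<chi> i j. if i = p j then 1 else 0))"

text \<open>Joint Lebesgue density of the latent Gaussian AR(1) process s_0,...,s_(T-1)
  in (R^d)^T, for diagonal B, Phi, Psi (only diagonal entries enter):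
  s_0 ~ N(m, Phi), s_(t+1) | s_t ~ N(B s_t + b, Psi).\<close>
definition latent_density ::
  "nat \<Rightarrow> real^'d \<Rightarrow> real^'d^'d \<Rightarrow> real^'d^'d \<Rightarrow> real^'d \<Rightarrow> real^'d^'d
     \<Rightarrow> (nat \<Rightarrow> real^'d) \<Rightarrow> real" where
  "latent_density T m \<Phi> B b \<Psi> s =
     (\<Prod>i\<in>UNIV. normal_density (m $ i) (sqrt (\<Phi> $ i $ i)) (s 0 $ i) *
        (\<Prod>t<T - 1. normal_density (B $ i $ i * (s t $ i) + b $ i) (sqrt (\<Psi> $ i $ i))
                         (s (Suc t) $ i)))"

text \<open>Probability that the observed count process equals y (time indices 0..T-1),
  x_t^(k) | s ~ Poisson(exp((Gamma s_t)^(k))) independently.\<close>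
definition obs_prob ::
  "nat \<Rightarrow> real^'d \<Rightarrow> real^'d^'d \<Rightarrow> real^'d^'d \<Rightarrow> real^'d \<Rightarrow> real^'d^'d \<Rightarrow> real^'d^'k
     \<Rightarrow> (nat \<Rightarrow> nat^'k) \<Rightarrow> ennreal" where
  "obs_prob T m \<Phi> B b \<Psi> \<Gamma> y =
     (\<integral>\<^sup>+ s. ennreal (latent_density T m \<Phi> B b \<Psi> s *
         (\<Prod>t<T. \<Prod>k\<in>UNIV. pmf (poisson_pmf (exp ((\<Gamma> *v s t) $ k))) (y t $ k)))
      \<partial>(PiM {..<T} (\<lambda>_. (lborel :: (real^'d) measure))))"

definition ARPLN_params :: "real^'d \<Rightarrow> real^'d^'d \<Rightarrow> real^'d^'d \<Rightarrow> real^'d \<Rightarrow> real^'d^'d \<Rightarrow> bool" where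
  "ARPLN_params m \<Phi> B b \<Psi> \<longleftrightarrow> is_diag \<Phi> \<and> is_diag \<Psi> \<and> is_diag B \<and>
     (\<forall>i. \<Phi> $ i $ i > 0) \<and> (\<forall>i. \<Psi> $ i $ i > 0)"

end

theory Submission
  imports Defs
begin

lemma nn_normal:
  assumes "0 < \<sigma>"
  shows "(\<integral>\<^sup>+x. ennreal (normal_density \<mu> \<sigma> x) \<partial>lborel) = 1"
  using assms by (simp add: nn_integral_eq_integral)

lemma normal_tilt:
  assumes "0 < \<sigma>"
  shows "normal_density \<mu> \<sigma> x * exp (c*x) = exp (c*\<mu> + c^2*\<sigma>^2/2) * normal_density (\<mu> + c*\<sigma>^2) \<sigma> x"
proof -
  have "-(x - \<mu>)\<^sup>2/ (2 * \<sigma>\<^sup>2) + c*x = c*\<mu> + c^2*\<sigma>^2/2 + (-(x - (\<mu> + c*\<sigma>^2))\<^sup>2/ (2 * \<sigma>\<^sup>2))"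
    using assms by (simp add: field_simps power2_eq_square)
  then show ?thesis unfolding normal_density_def
    by (simp add: exp_add[symmetric] algebra_simps)
qed

lemma normal_mgf:
  assumes "0 < \<sigma>"
  shows "(\<integral>\<^sup>+x. ennreal (normal_density \<mu> \<sigma> x * exp (c*x)) \<partial>lborel) = ennreal (exp (c*\<mu> + c^2*\<sigma>^2/2))"
  apply (simp only: normal_tilt[OF assms] ennreal_mult' exp_ge_zero)
  apply (simp add: nn_integral_cmult nn_normal[OF assms] ennreal_mult)
  done

lemma nn_integral_vec_prod:
  fixes f :: "'d::finite \<Rightarrow> real \<Rightarrow> real"
  assumes [measurable]: "\<And>i. f i \<in> borel_measurable borel"
    and nn: "\<And>i x. 0 \<le> f i x"
  shows "(\<integral>\<^sup>+(x::real^'d). ennreal (\<Prod>i\<in>UNIV. f i (x $ i)) \<partial>lborel) = (\<Prod>i\<in>UNIV. \<integral>\<^sup>+y. ennreal (f i y) \<partial>lborel)"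
proof -
  define g where "g b = f (SOME i. b = axis i (1::real))" for b :: "real^'d"
  have inj: "inj (\<lambda>i::'d. axis i (1::real))" by (auto simp: inj_def axis_eq_axis)
  have B: "(Basis :: (real^'d) set) = range (\<lambda>i. axis i 1)" by (auto simp: Basis_vec_def)
  have g: "g (axis i 1) = f i" for i
    unfolding g_def by (rule arg_cong[where f=f]) (metis (mono_tags) axis_eq_axis zero_neq_one someI_ex)
  have "(\<integral>\<^sup>+(x::real^'d). ennreal (\<Prod>i\<in>UNIV. f i (x $ i)) \<partial>lborel) =
        (\<integral>\<^sup>+(x::real^'d). (\<Prod>b\<in>Basis. ennreal (g b (x \<bullet> b))) \<partial>lborel)"
    by (simp add: B prod.reindex[OF inj] g inner_axis prod_ennreal nn)
  also have "\<dots> = (\<Prod>b\<in>Basis. \<integral>\<^sup>+y. ennreal (g b y) \<partial>lborel)"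
    apply (rule nn_integral_lborel_prod[where f="\<lambda>b x. ennreal (g b x)"])
    apply (auto simp: B g)
    done
  also have "\<dots> = (\<Prod>i\<in>UNIV. \<integral>\<^sup>+y. ennreal (f i y) \<partial>lborel)"
    by (simp add: B prod.reindex[OF inj] g)
  finally show ?thesis .
qed
definition fall :: "nat \<Rightarrow> nat \<Rightarrow> nat" where
  "fall j n = (\<Prod>i<j. (n - i))"

lemma fall_shift: "real (fall j (n + j)) * fact n = fact (n + j)"
proof (induction j arbitrary: n)
  case 0 then show ?case by (simp add: fall_def)
next
  case (Suc j)
  have "fall (Suc j) (n + Suc j) = (n + 1) * fall j (Suc n + j)"
    by (simp add: fall_def prod.lessThan_Suc Suc_diff_le)
  then have "real (fall (Suc j) (n + Suc j)) * fact n = real (fall j (Suc n + j)) * fact (Suc n)"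
    by (simp add: algebra_simps)
  also have "\<dots> = fact (n + Suc j)" using Suc[of "Suc n"] by simp
  finally show ?case .
qed

lemma fall_small: "i < j \<Longrightarrow> fall j i = 0"
  unfolding fall_def by (auto intro: exI[of _ i])

lemma poisson_fall:
  assumes r: "0 < r"
  shows "(\<integral>\<^sup>+n. ennreal (pmf (poisson_pmf r) n * real (fall j n)) \<partial>count_space UNIV) = ennreal (r ^ j)"
proof -
  define f where "f n = pmf (poisson_pmf r) n * real (fall j n)" for n
  have sh: "(\<lambda>n. f (n + j)) = (\<lambda>n. (r ^ j * exp (-r)) * (r ^ n /\<^sub>R fact n))"
  proof
    fix n
    have "f (n + j) = r ^ (n + j) / fact (n+j) * exp (-r) * real (fall j (n + j))"
      using r by (simp add: f_def)
    also have "\<dots> = r ^ (n + j) * exp (-r) * (real (fall j (n + j)) * fact n) / (fact (n+j) * fact n)"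
      by (simp add: field_simps)
    also have "\<dots> = (r ^ j * exp (-r)) * (r ^ n /\<^sub>R fact n)"
      using fall_shift[of j n] by (simp add: power_add field_simps)
    finally show "f (n + j) = (r ^ j * exp (-r)) * (r ^ n /\<^sub>R fact n)" .
  qed
  have "(\<lambda>n. f (n + j)) sums ((r ^ j * exp (-r)) * exp r)"
    unfolding sh by (rule sums_mult[OF exp_converges])
  moreover have "(r ^ j * exp (-r)) * exp r = r ^ j"
    by (simp add: exp_minus field_simps)
  moreover have "(\<Sum>i<j. f i) = 0" by (simp add: f_def fall_small)
  ultimately have s: "f sums (r ^ j)" by (simp add: sums_iff_shift)
  have nn: "0 \<le> f n" for n using r by (simp add: f_def)
  have "(\<integral>\<^sup>+n. ennreal (f n) \<partial>count_space UNIV) = ennreal (\<Sum>n. f n)"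
    by (simp add: nn_integral_count_space_nat suminf_ennreal2 nn sums_summable[OF s])
  then show ?thesis using s unfolding f_def sums_iff by simp
qed

lemma meas_comp_nth:
  assumes "t \<in> I"
  shows "(\<lambda>s. s t $ i) \<in> borel_measurable (PiM I (\<lambda>_. (lborel :: (real^'d) measure)))"
proof -
  have "(\<lambda>x::real^'d. x $ i) \<in> borel_measurable borel"
    by (intro borel_measurable_continuous_onI continuous_intros)
  then have "(\<lambda>x::real^'d. x $ i) \<in> borel_measurable lborel" by simp
  from measurable_comp[OF measurable_component_singleton[OF assms, of "\<lambda>_. lborel"] this]
  show ?thesis by (simp add: comp_def)
qed

lemma meas_latent:
  assumes "1 \<le> T" "T \<le> n"
  shows "(\<lambda>s. latent_density T m \<Phi> B b \<Psi> s) \<in> borel_measurable (PiM {..<n} (\<lambda>_. (lborel :: (real^'d) measure)))"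
  unfolding latent_density_def
proof (intro borel_measurable_prod borel_measurable_times)
  fix i
  have "0 \<in> {..<n}" using assms by auto
  note [measurable] = meas_comp_nth[OF this]
  show "(\<lambda>x. normal_density (m $ i) (sqrt (\<Phi> $ i $ i)) (x 0 $ i)) \<in> borel_measurable (Pi\<^sub>M {..<n} (\<lambda>_. lborel))"
    by measurable
  fix t assume "t \<in> {..<T-1}"
  then have "t \<in> {..<n}" "Suc t \<in> {..<n}" using assms by auto
  note [measurable] = meas_comp_nth[OF this(1)] meas_comp_nth[OF this(2)]
  show "(\<lambda>x. normal_density (B $ i $ i * x t $ i + b $ i) (sqrt (\<Psi> $ i $ i)) (x (Suc t) $ i)) \<in> borel_measurable (Pi\<^sub>M {..<n} (\<lambda>_. lborel))"
    unfolding normal_density_def by measurable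
qed



definition trd :: "real^'d^'d \<Rightarrow> real^'d \<Rightarrow> real^'d^'d \<Rightarrow> 'd \<Rightarrow> real \<Rightarrow> real \<Rightarrow> real" where
  "trd B b \<Psi> i x y = normal_density (B $ i $ i * x + b $ i) (sqrt (\<Psi> $ i $ i)) y"

lemma latent_Suc:
  assumes "1 \<le> n"
  shows "latent_density (Suc n) m \<Phi> B b \<Psi> s =
     latent_density n m \<Phi> B b \<Psi> s * (\<Prod>i\<in>UNIV. trd B b \<Psi> i (s (n-1) $ i) (s n $ i))"
proof -
  obtain k where n: "n = Suc k" using assms by (cases n) auto
  show ?thesis unfolding latent_density_def n trd_def
    by (simp add: prod.lessThan_Suc prod.distrib[symmetric] mult_ac)
qed

lemma latent_cong:
  assumes "\<And>t. t < n \<Longrightarrow> s t = s' t" "1 \<le> n"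
  shows "latent_density n m \<Phi> B b \<Psi> s = latent_density n m \<Phi> B b \<Psi> s'"
  unfolding latent_density_def using assms
  by (intro prod.cong refl arg_cong2[where f="(*)"] prod.cong) auto

definition Efun :: "real^'d \<Rightarrow> real^'d \<Rightarrow> (nat \<Rightarrow> real^'d) \<Rightarrow> real" where
  "Efun c0 c1 s = exp (\<Sum>i\<in>UNIV. c0 $ i * s 0 $ i + c1 $ i * s 1 $ i)"

lemma meas_Efun:
  assumes "2 \<le> n"
  shows "(\<lambda>s. Efun c0 c1 s) \<in> borel_measurable (PiM {..<n} (\<lambda>_. (lborel :: (real^'d) measure)))"
proof -
  have "0 \<in> {..<n}" "1 \<in> {..<n}" using assms by auto
  note [measurable] = meas_comp_nth[OF this(1)] meas_comp_nth[OF this(2)]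
  show ?thesis unfolding Efun_def by measurable
qed

lemma vec_prod_normal:
  assumes "\<And>i. 0 < \<sigma> i"
  shows "(\<integral>\<^sup>+(y::real^'d). ennreal (\<Prod>i\<in>UNIV. normal_density (\<mu> i) (\<sigma> i) (y $ i)) \<partial>lborel) = 1"
  using assms by (subst nn_integral_vec_prod[where f="\<lambda>i. normal_density (\<mu> i) (\<sigma> i)"]) (auto simp: nn_normal)

lemma gauss_step:
  assumes "2 \<le> n" and \<Psi>: "\<And>i. 0 < \<Psi> $ i $ i"
  shows "(\<integral>\<^sup>+s. ennreal (latent_density (Suc n) m \<Phi> B b \<Psi> s * Efun c0 c1 s) \<partial>PiM {..<Suc n} (\<lambda>_. (lborel :: (real^'d) measure)))
       = (\<integral>\<^sup>+s. ennreal (latent_density n m \<Phi> B b \<Psi> s * Efun c0 c1 s) \<partial>PiM {..<n} (\<lambda>_. (lborel :: (real^'d) measure)))"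
proof -
  interpret product_sigma_finite "\<lambda>_. (lborel :: (real^'d) measure)" by standard
  have meas: "(\<lambda>s. ennreal (latent_density (Suc n) m \<Phi> B b \<Psi> s * Efun c0 c1 s)) \<in> borel_measurable (PiM (insert n {..<n}) (\<lambda>_. (lborel :: (real^'d) measure)))"
    using assms(1) unfolding lessThan_Suc[symmetric]
    by (intro measurable_compose[OF _ measurable_ennreal] borel_measurable_times meas_latent meas_Efun) auto
  have "(\<integral>\<^sup>+s. ennreal (latent_density (Suc n) m \<Phi> B b \<Psi> s * Efun c0 c1 s) \<partial>PiM {..<Suc n} (\<lambda>_. (lborel :: (real^'d) measure)))
     = (\<integral>\<^sup>+x. (\<integral>\<^sup>+y. ennreal (latent_density (Suc n) m \<Phi> B b \<Psi> (x(n:=y)) * Efun c0 c1 (x(n:=y))) \<partial>lborel) \<partial>PiM {..<n} (\<lambda>_. (lborel :: (real^'d) measure)))"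
    unfolding lessThan_Suc by (rule product_nn_integral_insert[OF _ _ meas]) auto
  also have "\<dots> = (\<integral>\<^sup>+x. ennreal (latent_density n m \<Phi> B b \<Psi> x * Efun c0 c1 x) \<partial>PiM {..<n} (\<lambda>_. (lborel :: (real^'d) measure)))"
  proof (rule nn_integral_cong)
    fix x :: "nat \<Rightarrow> real^'d"
    have L: "latent_density n m \<Phi> B b \<Psi> (x(n:=y)) = latent_density n m \<Phi> B b \<Psi> x" for y
      using assms(1) by (intro latent_cong) auto
    have Ef: "Efun c0 c1 (x(n:=y)) = Efun c0 c1 x" for y
      using assms(1) unfolding Efun_def by simp
    have "(\<integral>\<^sup>+y. ennreal (latent_density (Suc n) m \<Phi> B b \<Psi> (x(n:=y)) * Efun c0 c1 (x(n:=y))) \<partial>lborel)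
       = (\<integral>\<^sup>+y. ennreal (latent_density n m \<Phi> B b \<Psi> x * Efun c0 c1 x) * ennreal (\<Prod>i\<in>UNIV. trd B b \<Psi> i (x (n-1) $ i) (y $ i)) \<partial>lborel)"
    proof (intro nn_integral_cong)
      fix y :: "real^'d"
      have 1: "latent_density (Suc n) m \<Phi> B b \<Psi> (x(n:=y)) = latent_density n m \<Phi> B b \<Psi> x * (\<Prod>i\<in>UNIV. trd B b \<Psi> i (x (n-1) $ i) (y $ i))"
        using assms(1) by (simp add: latent_Suc L)
      have 2: "0 \<le> latent_density n m \<Phi> B b \<Psi> x * Efun c0 c1 x"
        by (simp add: latent_density_def Efun_def prod_nonneg)
      have 3: "0 \<le> (\<Prod>i\<in>UNIV. trd B b \<Psi> i (x (n-1) $ i) (y $ i))"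
        by (simp add: trd_def prod_nonneg)
      show "ennreal (latent_density (Suc n) m \<Phi> B b \<Psi> (x(n:=y)) * Efun c0 c1 (x(n:=y))) =
         ennreal (latent_density n m \<Phi> B b \<Psi> x * Efun c0 c1 x) * ennreal (\<Prod>i\<in>UNIV. trd B b \<Psi> i (x (n-1) $ i) (y $ i))"
        unfolding 1 Ef ennreal_mult'[OF 2, symmetric] by (simp add: mult_ac)
    qed
    also have "\<dots> = ennreal (latent_density n m \<Phi> B b \<Psi> x * Efun c0 c1 x) * 1"
      unfolding trd_def
      by (subst nn_integral_cmult) (auto simp: vec_prod_normal \<Psi>)
    finally show "(\<integral>\<^sup>+y. ennreal (latent_density (Suc n) m \<Phi> B b \<Psi> (x(n:=y)) * Efun c0 c1 (x(n:=y))) \<partial>lborel)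
       = ennreal (latent_density n m \<Phi> B b \<Psi> x * Efun c0 c1 x)" by simp
  qed
  finally show ?thesis .
qed

definition Qlat :: "real^'d \<Rightarrow> real^'d^'d \<Rightarrow> real^'d^'d \<Rightarrow> real^'d \<Rightarrow> real^'d^'d \<Rightarrow> real^'d \<Rightarrow> real^'d \<Rightarrow> real" where
  "Qlat m \<Phi> B b \<Psi> c0 c1 = (\<Sum>i\<in>UNIV. (c0$i + c1$i * B$i$i) * m$i + c1$i * b$i +
      ((c0$i + c1$i * B$i$i)^2 * \<Phi>$i$i + (c1$i)^2 * \<Psi>$i$i)/2)"

lemma gauss_base:
  assumes \<Phi>: "\<And>i. 0 < \<Phi> $ i $ i" and \<Psi>: "\<And>i. 0 < \<Psi> $ i $ i"
  shows "(\<integral>\<^sup>+s. ennreal (latent_density 2 m \<Phi> B b \<Psi> s * Efun c0 c1 s) \<partial>PiM {..<2} (\<lambda>_. (lborel :: (real^'d) measure)))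
       = ennreal (exp (Qlat m \<Phi> B b \<Psi> c0 c1))"
proof -
  interpret product_sigma_finite "\<lambda>_. (lborel :: (real^'d) measure)" by standard
  have meas: "(\<lambda>s. ennreal (latent_density 2 m \<Phi> B b \<Psi> s * Efun c0 c1 s)) \<in> borel_measurable (PiM (insert 1 {0}) (\<lambda>_. (lborel :: (real^'d) measure)))"
  proof -
    have e: "insert 1 {0::nat} = {..<2}" by auto
    show ?thesis unfolding e by (intro measurable_compose[OF _ measurable_ennreal] borel_measurable_times meas_latent meas_Efun) auto
  qed
  define N0 where "N0 i v = normal_density (m $ i) (sqrt (\<Phi> $ i $ i)) v * exp (c0$i * v)" for i v
  define h where "h v = (\<Prod>i\<in>UNIV. N0 i (v$i) * exp (c1$i * (B $ i $ i * v$i + b $ i) + (c1$i)^2 * \<Psi>$i$i / 2))" for v :: "real^'d"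
  have "{..<2::nat} = insert 1 {0}" by auto
  then have "(\<integral>\<^sup>+s. ennreal (latent_density 2 m \<Phi> B b \<Psi> s * Efun c0 c1 s) \<partial>PiM {..<2} (\<lambda>_. (lborel :: (real^'d) measure)))
     = (\<integral>\<^sup>+x. (\<integral>\<^sup>+y. ennreal (latent_density 2 m \<Phi> B b \<Psi> (x(1:=y)) * Efun c0 c1 (x(1:=y))) \<partial>lborel) \<partial>PiM {0::nat} (\<lambda>_. (lborel :: (real^'d) measure)))"
    by (simp only:) (rule product_nn_integral_insert[OF _ _ meas], auto)
  also have "\<dots> = (\<integral>\<^sup>+x. ennreal (h (x 0)) \<partial>PiM {0::nat} (\<lambda>_. (lborel :: (real^'d) measure)))"
  proof (rule nn_integral_cong)
    fix x :: "nat \<Rightarrow> real^'d"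
    have "(\<integral>\<^sup>+y. ennreal (latent_density 2 m \<Phi> B b \<Psi> (x(1:=y)) * Efun c0 c1 (x(1:=y))) \<partial>lborel)
       = (\<integral>\<^sup>+y. ennreal (\<Prod>i\<in>UNIV. N0 i (x 0 $ i)) * ennreal (\<Prod>i\<in>UNIV. trd B b \<Psi> i (x 0 $ i) (y $ i) * exp (c1$i * y$i)) \<partial>lborel)"
    proof (intro nn_integral_cong)
      fix y :: "real^'d"
      have "latent_density 2 m \<Phi> B b \<Psi> (x(1:=y)) * Efun c0 c1 (x(1:=y)) =
        (\<Prod>i\<in>UNIV. N0 i (x 0 $ i)) * (\<Prod>i\<in>UNIV. trd B b \<Psi> i (x 0 $ i) (y $ i) * exp (c1$i * y$i))"
        by (simp add: latent_density_def Efun_def N0_def trd_def exp_sum prod.distrib[symmetric] exp_add mult_ac)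
      moreover have "0 \<le> (\<Prod>i\<in>UNIV. N0 i (x 0 $ i))" by (simp add: N0_def prod_nonneg)
      ultimately show "ennreal (latent_density 2 m \<Phi> B b \<Psi> (x(1:=y)) * Efun c0 c1 (x(1:=y))) =
        ennreal (\<Prod>i\<in>UNIV. N0 i (x 0 $ i)) * ennreal (\<Prod>i\<in>UNIV. trd B b \<Psi> i (x 0 $ i) (y $ i) * exp (c1$i * y$i))"
        by (simp add: ennreal_mult')
    qed
    also have "\<dots> = ennreal (\<Prod>i\<in>UNIV. N0 i (x 0 $ i)) * (\<Prod>i\<in>UNIV. \<integral>\<^sup>+z. ennreal (trd B b \<Psi> i (x 0 $ i) z * exp (c1$i * z)) \<partial>lborel)"
      apply (subst nn_integral_cmult)
       apply (simp add: trd_def)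
      apply (subst nn_integral_vec_prod[where f="\<lambda>i z. trd B b \<Psi> i (x 0 $ i) z * exp (c1$i * z)"])
        apply (simp_all add: trd_def)
      done
    also have "\<dots> = ennreal (\<Prod>i\<in>UNIV. N0 i (x 0 $ i)) * (\<Prod>i\<in>UNIV. ennreal (exp (c1$i * (B $ i $ i * x 0 $i + b $ i) + (c1$i)^2 * \<Psi>$i$i / 2)))"
      unfolding trd_def using \<Psi> by (simp add: normal_mgf less_imp_le)
    also have "\<dots> = ennreal (h (x 0))"
      by (simp add: h_def prod_ennreal N0_def prod_nonneg ennreal_mult'[symmetric] prod.distrib)
    finally show "(\<integral>\<^sup>+y. ennreal (latent_density 2 m \<Phi> B b \<Psi> (x(1:=y)) * Efun c0 c1 (x(1:=y))) \<partial>lborel) = ennreal (h (x 0))" .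
  qed
  also have "\<dots> = (\<integral>\<^sup>+v. ennreal (h v) \<partial>lborel)"
    by (rule product_nn_integral_singleton) (simp add: h_def N0_def)
  also have "\<dots> = (\<integral>\<^sup>+v. ennreal (\<Prod>i\<in>UNIV. exp (c1$i * b$i + (c1$i)^2 * \<Psi>$i$i / 2)) * ennreal (\<Prod>i\<in>UNIV. normal_density (m $ i) (sqrt (\<Phi> $ i $ i)) (v$i) * exp ((c0$i + c1$i * B$i$i) * v$i)) \<partial>lborel)"
  proof (intro nn_integral_cong)
    fix v :: "real^'d"
    have "h v = (\<Prod>i\<in>UNIV. exp (c1$i * b$i + (c1$i)^2 * \<Psi>$i$i / 2)) * (\<Prod>i\<in>UNIV. normal_density (m $ i) (sqrt (\<Phi> $ i $ i)) (v$i) * exp ((c0$i + c1$i * B$i$i) * v$i))"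
      unfolding h_def N0_def prod.distrib[symmetric]
      by (rule prod.cong, rule refl) (simp add: exp_add algebra_simps)
    then show "ennreal (h v) = ennreal (\<Prod>i\<in>UNIV. exp (c1$i * b$i + (c1$i)^2 * \<Psi>$i$i / 2)) * ennreal (\<Prod>i\<in>UNIV. normal_density (m $ i) (sqrt (\<Phi> $ i $ i)) (v$i) * exp ((c0$i + c1$i * B$i$i) * v$i))"
      by (simp add: ennreal_mult' prod_nonneg)
  qed
  also have "\<dots> = ennreal (\<Prod>i\<in>UNIV. exp (c1$i * b$i + (c1$i)^2 * \<Psi>$i$i / 2)) * (\<Prod>i\<in>UNIV. \<integral>\<^sup>+z. ennreal (normal_density (m $ i) (sqrt (\<Phi> $ i $ i)) z * exp ((c0$i + c1$i * B$i$i) * z)) \<partial>lborel)"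
      apply (subst nn_integral_cmult)
       apply simp
      apply (subst nn_integral_vec_prod[where f="\<lambda>i z. normal_density (m $ i) (sqrt (\<Phi> $ i $ i)) z * exp ((c0$i + c1$i * B$i$i) * z)"])
        apply simp_all
      done
  also have "\<dots> = ennreal (\<Prod>i\<in>UNIV. exp (c1$i * b$i + (c1$i)^2 * \<Psi>$i$i / 2)) * (\<Prod>i\<in>UNIV. ennreal (exp ((c0$i + c1$i * B$i$i) * m$i + (c0$i + c1$i * B$i$i)^2 * \<Phi>$i$i / 2)))"
    using \<Phi> by (simp add: normal_mgf less_imp_le)
  also have "\<dots> = ennreal (exp (Qlat m \<Phi> B b \<Psi> c0 c1))"
    by (simp add: Qlat_def prod_ennreal ennreal_mult'[symmetric] exp_sum[symmetric] exp_add[symmetric] sum.distrib[symmetric] add_divide_distrib algebra_simps)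
  finally show ?thesis .
qed

lemma gauss:
  assumes "2 \<le> T" and \<Phi>: "\<And>i. 0 < \<Phi> $ i $ i" and \<Psi>: "\<And>i. 0 < \<Psi> $ i $ i"
  shows "(\<integral>\<^sup>+s. ennreal (latent_density T m \<Phi> B b \<Psi> s * Efun c0 c1 s) \<partial>PiM {..<T} (\<lambda>_. (lborel :: (real^'d) measure)))
       = ennreal (exp (Qlat m \<Phi> B b \<Psi> c0 c1))"
  using assms(1)
proof (induction T rule: nat_induct_at_least)
  case base
  then show ?case using gauss_base[OF \<Phi> \<Psi>] by simp
next
  case (Suc n)
  then show ?case using gauss_step[OF Suc(1) \<Psi>] by simp
qed

lemma meas_Gs:
  assumes "t \<in> I"
  shows "(\<lambda>s. (\<Gamma> *v s t) $ k) \<in> borel_measurable (PiM I (\<lambda>_. (lborel :: (real^'d) measure)))"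
proof -
  note [measurable] = meas_comp_nth[OF assms]
  show ?thesis unfolding matrix_vector_mult_def vec_lambda_beta by measurable
qed

definition Amk :: "nat \<Rightarrow> (nat \<times> 'k::finite) set" where
  "Amk T = {..<T} \<times> UNIV"

definition PY :: "nat \<Rightarrow> (nat \<times> 'k::finite \<Rightarrow> nat) measure" where
  "PY T = PiM (Amk T) (\<lambda>_. count_space UNIV)"

definition yv :: "(nat \<times> 'k::finite \<Rightarrow> nat) \<Rightarrow> nat \<Rightarrow> nat^'k" where
  "yv Y = (\<lambda>t. \<chi> k. Y (t, k))"

definition Ffun :: "nat \<Rightarrow> (nat \<times> 'k::finite \<Rightarrow> nat) \<Rightarrow> (nat \<times> 'k \<Rightarrow> nat) \<Rightarrow> real" where
  "Ffun T j Y = (\<Prod>a\<in>Amk T. real (fall (j a) (Y a)))"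

definition Pfun :: "nat \<Rightarrow> real^'d^'k \<Rightarrow> (nat \<Rightarrow> real^'d) \<Rightarrow> (nat \<times> 'k::finite \<Rightarrow> nat) \<Rightarrow> real" where
  "Pfun T \<Gamma> s Y = (\<Prod>a\<in>Amk T. pmf (poisson_pmf (exp ((\<Gamma> *v s (fst a)) $ snd a))) (Y a))"

lemma Pfun_eq: "(\<Prod>t<T. \<Prod>k\<in>UNIV. pmf (poisson_pmf (exp ((\<Gamma> *v s t) $ k))) (yv Y t $ k)) = Pfun T \<Gamma> s Y"
  unfolding Pfun_def Amk_def yv_def by (simp add: prod.cartesian_product split_def)

lemma meas_joint:
  fixes \<Gamma> :: "real^'d^'k::finite" and j :: "nat \<times> 'k \<Rightarrow> nat"
  assumes "1 \<le> T"
  shows "(\<lambda>(s, Y). ennreal (latent_density T m \<Phi> B b \<Psi> s * Pfun T \<Gamma> s Y) * ennreal (Ffun T j Y))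
     \<in> borel_measurable (PiM {..<T} (\<lambda>_. (lborel :: (real^'d) measure)) \<Otimes>\<^sub>M PY T)"
   and "Y \<in> space (PY T) \<Longrightarrow> (\<lambda>s. ennreal (latent_density T m \<Phi> B b \<Psi> s * Pfun T \<Gamma> s Y))
     \<in> borel_measurable (PiM {..<T} (\<lambda>_. (lborel :: (real^'d) measure)))"
proof -
  have L: "(\<lambda>z. latent_density T m \<Phi> B b \<Psi> (fst z)) \<in> borel_measurable (PiM {..<T} (\<lambda>_. (lborel :: (real^'d) measure)) \<Otimes>\<^sub>M PY T)"
    using assms by (intro measurable_compose[OF measurable_fst meas_latent]) auto
  have comp: "(\<lambda>z. snd z a) \<in> (PiM {..<T} (\<lambda>_. (lborel :: (real^'d) measure)) \<Otimes>\<^sub>M PY T) \<rightarrow>\<^sub>M count_space UNIV"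
    if "a \<in> Amk T" for a
    unfolding PY_def using that by (intro measurable_compose[OF measurable_snd measurable_component_singleton]) auto
  have P: "(\<lambda>z. Pfun T \<Gamma> (fst z) (snd z)) \<in> borel_measurable (PiM {..<T} (\<lambda>_. (lborel :: (real^'d) measure)) \<Otimes>\<^sub>M PY T)"
    unfolding Pfun_def
  proof (intro borel_measurable_prod)
    fix a :: "nat \<times> 'k" assume a: "a \<in> Amk T"
    then have t: "fst a \<in> {..<T}" by (auto simp: Amk_def)
    have G: "(\<lambda>z. (\<Gamma> *v fst z (fst a)) $ snd a) \<in> borel_measurable (PiM {..<T} (\<lambda>_. (lborel :: (real^'d) measure)) \<Otimes>\<^sub>M PY T)"
      by (intro measurable_compose[OF measurable_fst meas_Gs[OF t]])
    show "(\<lambda>z. pmf (poisson_pmf (exp ((\<Gamma> *v fst z (fst a)) $ snd a))) (snd z a)) \<in> borel_measurable (PiM {..<T} (\<lambda>_. (lborel :: (real^'d) measure)) \<Otimes>\<^sub>M PY T)"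
    proof (rule measurable_compose_countable[where f="\<lambda>n z. pmf (poisson_pmf (exp ((\<Gamma> *v fst z (fst a)) $ snd a))) n", OF _ comp[OF a]])
      fix n :: nat
      note [measurable] = G
      show "(\<lambda>z. pmf (poisson_pmf (exp ((\<Gamma> *v fst z (fst a)) $ snd a))) n) \<in> borel_measurable (PiM {..<T} (\<lambda>_. (lborel :: (real^'d) measure)) \<Otimes>\<^sub>M PY T)"
        by (simp add: pmf_poisson) measurable
    qed
  qed
  have F: "(\<lambda>z. Ffun T j (snd z)) \<in> borel_measurable (PiM {..<T} (\<lambda>_. (lborel :: (real^'d) measure)) \<Otimes>\<^sub>M PY T)"
    unfolding Ffun_def
  proof (intro borel_measurable_prod)
    fix a :: "nat \<times> 'k" assume a: "a \<in> Amk T"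
    have "(\<lambda>n. real (fall (j a) n)) \<in> count_space UNIV \<rightarrow>\<^sub>M borel" by simp
    from measurable_comp[OF comp[OF a] this]
    show "(\<lambda>z. real (fall (j a) (snd z a))) \<in> borel_measurable (PiM {..<T} (\<lambda>_. (lborel :: (real^'d) measure)) \<Otimes>\<^sub>M PY T)"
      by (simp add: comp_def)
  qed
  show "(\<lambda>(s, Y). ennreal (latent_density T m \<Phi> B b \<Psi> s * Pfun T \<Gamma> s Y) * ennreal (Ffun T j Y))
     \<in> borel_measurable (PiM {..<T} (\<lambda>_. (lborel :: (real^'d) measure)) \<Otimes>\<^sub>M PY T)"
    unfolding case_prod_beta'
    by (intro borel_measurable_times_ennreal measurable_compose[OF _ measurable_ennreal] borel_measurable_times L P F)
  have "(\<lambda>z. ennreal (latent_density T m \<Phi> B b \<Psi> (fst z) * Pfun T \<Gamma> (fst z) (snd z)))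
     \<in> borel_measurable (PiM {..<T} (\<lambda>_. (lborel :: (real^'d) measure)) \<Otimes>\<^sub>M PY T)"
    by (intro measurable_compose[OF _ measurable_ennreal] borel_measurable_times L P)
  from measurable_compose[OF measurable_Pair2' this]
  show "Y \<in> space (PY T) \<Longrightarrow> (\<lambda>s. ennreal (latent_density T m \<Phi> B b \<Psi> s * Pfun T \<Gamma> s Y))
     \<in> borel_measurable (PiM {..<T} (\<lambda>_. (lborel :: (real^'d) measure)))" by simp
qed

definition uj :: "(nat \<times> 'k::finite \<Rightarrow> nat) \<Rightarrow> nat \<Rightarrow> real^'k" where
  "uj j t = (\<chi> k. real (j (t, k)))"

lemma dot_T:
  fixes \<Gamma> :: "real^'d^'k::finite"
  shows "(\<Sum>k\<in>UNIV. u$k * (\<Gamma> *v v)$k) = (\<Sum>i\<in>UNIV. (transpose \<Gamma> *v u)$i * v$i)"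
  by (simp add: matrix_vector_mult_def transpose_def sum_distrib_left sum_distrib_right mult_ac) (rule sum.swap)

lemma Efun_eq:
  fixes \<Gamma> :: "real^'d^'k::finite" and j :: "nat \<times> 'k \<Rightarrow> nat"
  assumes "2 \<le> T" and j0: "\<And>t k. 2 \<le> t \<Longrightarrow> j (t, k) = 0"
  shows "(\<Prod>a\<in>Amk T. exp ((\<Gamma> *v s (fst a)) $ snd a) ^ j a) =
     Efun (transpose \<Gamma> *v uj j 0) (transpose \<Gamma> *v uj j 1) s"
proof -
  have "(\<Prod>a\<in>Amk T. exp ((\<Gamma> *v s (fst a)) $ snd a) ^ j a) = exp (\<Sum>a\<in>Amk T. real (j a) * (\<Gamma> *v s (fst a)) $ snd a)"
    by (simp add: exp_sum Amk_def exp_of_nat_mult)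
  also have "(\<Sum>a\<in>Amk T. real (j a) * (\<Gamma> *v s (fst a)) $ snd a) = (\<Sum>t<T. \<Sum>k\<in>UNIV. real (j (t,k)) * (\<Gamma> *v s t) $ k)"
    by (simp add: Amk_def sum.cartesian_product split_def)
  also have "\<dots> = (\<Sum>t\<in>{0,1}. \<Sum>k\<in>UNIV. real (j (t,k)) * (\<Gamma> *v s t) $ k)"
    using assms by (intro sum.mono_neutral_right) auto
  also have "\<dots> = (\<Sum>i\<in>UNIV. (transpose \<Gamma> *v uj j 0) $ i * s 0 $ i + (transpose \<Gamma> *v uj j 1) $ i * s 1 $ i)"
    using dot_T[of "uj j 0" \<Gamma> "s 0"] dot_T[of "uj j 1" \<Gamma> "s 1"] by (simp add: sum.distrib uj_def)
  finally show ?thesis by (simp add: Efun_def)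
qed

definition Mom where
  "Mom T m \<Phi> B b \<Psi> \<Gamma> j = (\<integral>\<^sup>+Y. obs_prob T m \<Phi> B b \<Psi> \<Gamma> (yv Y) * ennreal (Ffun T j Y) \<partial>PY T)"

lemma Mom_eq:
  fixes \<Gamma> :: "real^'d^'k::finite" and j :: "nat \<times> 'k \<Rightarrow> nat"
  assumes T: "2 \<le> T" and j0: "\<And>t k. 2 \<le> t \<Longrightarrow> j (t, k) = 0"
    and \<Phi>: "\<And>i. 0 < \<Phi> $ i $ i" and \<Psi>: "\<And>i. 0 < \<Psi> $ i $ i"
  shows "Mom T m \<Phi> B b \<Psi> \<Gamma> j = ennreal (exp (Qlat m \<Phi> B b \<Psi> (transpose \<Gamma> *v uj j 0) (transpose \<Gamma> *v uj j 1)))"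
proof -
  let ?M1 = "PiM {..<T} (\<lambda>_. (lborel :: (real^'d) measure))"
  let ?L = "latent_density T m \<Phi> B b \<Psi>"
  have T1: "1 \<le> T" using T by simp
  have finA: "finite (Amk T :: (nat \<times> 'k) set)" by (simp add: Amk_def)
  interpret PC: product_sigma_finite "\<lambda>_::nat \<times> 'k. (count_space UNIV :: nat measure)"
    by (intro product_sigma_finite.intro sigma_finite_measure_count_space_countable) auto
  interpret FPC: finite_product_sigma_finite "\<lambda>_::nat \<times> 'k. (count_space UNIV :: nat measure)" "Amk T"
    by standard (rule finA)
  interpret PL: product_sigma_finite "\<lambda>_::nat. (lborel :: (real^'d) measure)" by standard
  interpret FPL: finite_product_sigma_finite "\<lambda>_::nat. (lborel :: (real^'d) measure)" "{..<T}"
    by standard simp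
  interpret P2: pair_sigma_finite ?M1 "PY T :: (nat \<times> 'k \<Rightarrow> nat) measure"
    unfolding PY_def by (intro pair_sigma_finite.intro FPL.sigma_finite_measure_axioms FPC.sigma_finite_measure_axioms)
  have "Mom T m \<Phi> B b \<Psi> \<Gamma> j = (\<integral>\<^sup>+Y. (\<integral>\<^sup>+s. ennreal (?L s * Pfun T \<Gamma> s Y) \<partial>?M1) * ennreal (Ffun T j Y) \<partial>PY T)"
    unfolding Mom_def obs_prob_def Pfun_eq ..
  also have "\<dots> = (\<integral>\<^sup>+Y. (\<integral>\<^sup>+s. ennreal (?L s * Pfun T \<Gamma> s Y) * ennreal (Ffun T j Y) \<partial>?M1) \<partial>PY T)"
    by (intro nn_integral_cong nn_integral_multc[symmetric] meas_joint(2)[OF T1])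
  also have "\<dots> = (\<integral>\<^sup>+s. (\<integral>\<^sup>+Y. ennreal (?L s * Pfun T \<Gamma> s Y) * ennreal (Ffun T j Y) \<partial>PY T) \<partial>?M1)"
    using P2.Fubini'[OF meas_joint(1)[OF T1]] by simp
  also have "\<dots> = (\<integral>\<^sup>+s. ennreal (?L s * Efun (transpose \<Gamma> *v uj j 0) (transpose \<Gamma> *v uj j 1) s) \<partial>?M1)"
  proof (rule nn_integral_cong)
    fix s :: "nat \<Rightarrow> real^'d"
    let ?lam = "\<lambda>a::nat \<times> 'k. exp ((\<Gamma> *v s (fst a)) $ snd a)"
    have L0: "0 \<le> ?L s" by (simp add: latent_density_def prod_nonneg)
    have "(\<integral>\<^sup>+Y. ennreal (?L s * Pfun T \<Gamma> s Y) * ennreal (Ffun T j Y) \<partial>PY T)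
        = (\<integral>\<^sup>+Y. ennreal (?L s) * (\<Prod>a\<in>Amk T. ennreal (pmf (poisson_pmf (?lam a)) (Y a) * real (fall (j a) (Y a)))) \<partial>PY T)"
      by (intro nn_integral_cong)
         (simp add: Pfun_def Ffun_def L0 ennreal_mult'[symmetric] prod_ennreal prod_nonneg prod.distrib[symmetric] mult_ac)
    also have "\<dots> = ennreal (?L s) * (\<integral>\<^sup>+Y. (\<Prod>a\<in>Amk T. ennreal (pmf (poisson_pmf (?lam a)) (Y a) * real (fall (j a) (Y a)))) \<partial>PY T)"
      unfolding PY_def
      by (rule nn_integral_cmult, intro borel_measurable_prod_ennreal measurable_compose[OF measurable_component_singleton]) auto
    also have "\<dots> = ennreal (?L s) * (\<Prod>a\<in>Amk T. ennreal (?lam a ^ j a))"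
      unfolding PY_def
      by (subst PC.product_nn_integral_prod[OF finA, where f="\<lambda>a n. ennreal (pmf (poisson_pmf (?lam a)) n * real (fall (j a) n))"])
         (auto simp del: pmf_poisson simp: poisson_fall)
    also have "\<dots> = ennreal (?L s * Efun (transpose \<Gamma> *v uj j 0) (transpose \<Gamma> *v uj j 1) s)"
      by (simp add: prod_ennreal L0 ennreal_mult' Efun_eq[of T j \<Gamma>, OF T j0])
    finally show "(\<integral>\<^sup>+Y. ennreal (?L s * Pfun T \<Gamma> s Y) * ennreal (Ffun T j Y) \<partial>PY T) = ennreal (?L s * Efun (transpose \<Gamma> *v uj j 0) (transpose \<Gamma> *v uj j 1) s)" .
  qed
  also have "\<dots> = ennreal (exp (Qlat m \<Phi> B b \<Psi> (transpose \<Gamma> *v uj j 0) (transpose \<Gamma> *v uj j 1)))"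
    by (rule gauss[OF T \<Phi> \<Psi>])
  finally show ?thesis .
qed



definition dg :: "('d::finite \<Rightarrow> real) \<Rightarrow> real^'d^'d" where
  "dg v = (\<chi> i j. if i = j then v i else 0)"

lemma dg_right: "(A ** dg v) $ k $ j = A $ k $ j * v j"
  by (simp add: dg_def matrix_matrix_mult_def if_distrib if_distribR sum.delta' cong: if_cong)

lemma dg_left: "(dg v ** A) $ i $ j = v i * A $ i $ j"
  by (simp add: dg_def matrix_matrix_mult_def if_distrib if_distribR sum.delta cong: if_cong)

lemma dg_mult: "dg u ** dg v = dg (\<lambda>i. u i * v i)"
  by (simp add: vec_eq_iff dg_right) (simp add: dg_def)

lemma transpose_dg[simp]: "transpose (dg v) = dg v"
  by (simp add: vec_eq_iff transpose_def dg_def)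

lemma dg_one: "(\<And>i. v i = 1) \<Longrightarrow> dg v = mat 1"
  by (simp add: vec_eq_iff dg_def mat_def)

lemma dg_inv: "(\<And>i. v i \<noteq> 0) \<Longrightarrow> dg v ** dg (\<lambda>i. 1 / v i) = mat 1"
  by (simp add: dg_mult dg_one)

lemma dg_inv': "(\<And>i. v i \<noteq> 0) \<Longrightarrow> dg (\<lambda>i. 1 / v i) ** dg v = mat 1"
  by (simp add: dg_mult dg_one)

lemma matrix_sub_rdistrib:
  fixes A B :: "real^'n::finite^'m::finite"
  shows "(A - B) ** C = A ** C - B ** C"
  by (simp add: matrix_matrix_mult_def vec_eq_iff algebra_simps sum_subtractf)

lemma linalg:
  fixes G G' :: "real^'d::finite^'k::finite" and \<phi> \<phi>' \<beta> \<beta>' :: "'d \<Rightarrow> real"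
  assumes injG: "inj ((*v) G)" and injG': "inj ((*v) G')"
    and \<phi>: "\<And>i. 0 < \<phi> i" and \<phi>': "\<And>i. 0 < \<phi>' i"
    and \<beta>: "inj \<beta>" and \<beta>': "inj \<beta>'"
    and h1: "G ** dg \<phi> ** transpose G = G' ** dg \<phi>' ** transpose G'"
    and h2: "G ** dg (\<lambda>i. \<beta> i * \<phi> i) ** transpose G = G' ** dg (\<lambda>i. \<beta>' i * \<phi>' i) ** transpose G'"
  shows "\<exists>p c. p permutes (UNIV :: 'd set) \<and> (\<forall>j. c j \<noteq> 0) \<and> (\<forall>k j. G' $ k $ j = G $ k $ (p j) * c j)"
proof -
  obtain L where L: "L ** G = mat 1" using injG matrix_left_invertible_injective by blast
  obtain L' where L': "L' ** G' = mat 1" using injG' matrix_left_invertible_injective by blast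
  define Fi' where "Fi' = dg (\<lambda>i. 1 / \<phi>' i)"
  have \<phi>'nz: "\<And>i. \<phi>' i \<noteq> 0" using \<phi>' by (metis less_irrefl)
  have FFi': "dg \<phi>' ** Fi' = mat 1" unfolding Fi'_def by (rule dg_inv[OF \<phi>'nz])
  define R where "R = dg \<phi> ** transpose G ** (transpose L' ** Fi')"
  have "G' = G' ** dg \<phi>' ** transpose (L' ** G') ** Fi'"
    by (simp add: L' FFi' matrix_mul_assoc[symmetric])
  also have "\<dots> = (G' ** dg \<phi>' ** transpose G') ** (transpose L' ** Fi')"
    by (simp add: matrix_transpose_mul matrix_mul_assoc)
  also have "\<dots> = G ** R"
    unfolding h1[symmetric] R_def by (simp add: matrix_mul_assoc)
  finally have GR: "G' = G ** R" .
  have key: "dg w = R ** dg w' ** transpose R"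
    if hw: "G ** dg w ** transpose G = G' ** dg w' ** transpose G'" for w w'
  proof -
    have "dg w = (L ** G) ** dg w ** transpose (L ** G)" by (simp add: L)
    also have "\<dots> = L ** (G ** dg w ** transpose G) ** transpose L"
      by (simp add: matrix_transpose_mul matrix_mul_assoc)
    also have "\<dots> = L ** (G ** R ** dg w' ** transpose (G ** R)) ** transpose L"
      unfolding hw GR ..
    also have "\<dots> = (L ** G) ** R ** dg w' ** transpose R ** transpose (L ** G)"
      by (simp add: matrix_transpose_mul matrix_mul_assoc)
    finally show ?thesis by (simp add: L)
  qed
  have k1: "dg \<phi> = R ** dg \<phi>' ** transpose R" by (rule key[OF h1])
  have k2: "dg (\<lambda>i. \<beta> i * \<phi> i) = R ** dg (\<lambda>i. \<beta>' i * \<phi>' i) ** transpose R" by (rule key[OF h2])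
  have injR: "inj ((*v) R)"
  proof (rule injI)
    fix x y assume "R *v x = R *v y"
    then have "G' *v x = G' *v y" by (simp add: GR matrix_vector_mul_assoc[symmetric])
    then show "x = y" using injG' by (simp add: inj_eq)
  qed
  obtain RL where RL: "RL ** R = mat 1" using injR matrix_left_invertible_injective by blast
  have comm: "dg \<beta> ** R = R ** dg \<beta>'"
  proof -
    define X where "X = dg \<beta> ** R - R ** dg \<beta>'"
    have "X ** (dg \<phi>' ** transpose R) = dg \<beta> ** (R ** dg \<phi>' ** transpose R) - R ** (dg \<beta>' ** dg \<phi>') ** transpose R"
      by (simp add: X_def matrix_mul_assoc matrix_sub_rdistrib)
    also have "\<dots> = 0"
      by (simp add: k1[symmetric] k2 dg_mult)
    finally have X0: "X ** (dg \<phi>' ** transpose R) = 0" .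
    have "X = X ** ((dg \<phi>' ** transpose R) ** (transpose RL ** Fi'))"
    proof -
      have "(dg \<phi>' ** transpose R) ** (transpose RL ** Fi') = dg \<phi>' ** transpose (RL ** R) ** Fi'"
        by (simp add: matrix_transpose_mul matrix_mul_assoc)
      also have "\<dots> = mat 1" by (simp add: RL FFi')
      finally show ?thesis by simp
    qed
    also have "\<dots> = (X ** (dg \<phi>' ** transpose R)) ** (transpose RL ** Fi')" by (simp only: matrix_mul_assoc)
    also have "\<dots> = 0" by (simp add: X0)
    finally show ?thesis by (simp add: X_def)
  qed
  have ent: "\<beta> i * R $ i $ j = R $ i $ j * \<beta>' j" for i j
    using arg_cong[OF comm, of "\<lambda>M. M $ i $ j"] by (simp add: dg_left dg_right)
  have col: "\<exists>i. R $ i $ j \<noteq> 0" for j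
  proof (rule ccontr)
    assume "\<not> (\<exists>i. R $ i $ j \<noteq> 0)"
    then have "R *v axis j 1 = R *v 0"
      by (simp add: vec_eq_iff matrix_vector_mult_def axis_def if_distrib if_distribR sum.delta' cong: if_cong)
    then have "axis j (1::real) = 0" using injD[OF injR] by blast
    then show False by (simp add: axis_eq_0_iff)
  qed
  define p where "p j = (SOME i. R $ i $ j \<noteq> 0)" for j
  have pnz: "R $ p j $ j \<noteq> 0" for j unfolding p_def using col[of j] by (rule someI_ex)
  have pb: "\<beta> (p j) = \<beta>' j" for j using ent[of "p j" j] pnz[of j] by simp
  have zero: "i \<noteq> p j \<Longrightarrow> R $ i $ j = 0" for i j
  proof (rule ccontr)
    assume "i \<noteq> p j" "R $ i $ j \<noteq> 0"
    then have "\<beta> i = \<beta>' j" using ent[of i j] by simp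
    then have "\<beta> i = \<beta> (p j)" using pb by simp
    then show False using \<beta> \<open>i \<noteq> p j\<close> by (simp add: inj_eq)
  qed
  have injp: "inj p"
  proof (rule injI)
    fix j j' assume "p j = p j'"
    then have "\<beta>' j = \<beta>' j'" using pb by metis
    then show "j = j'" using \<beta>' by (simp add: inj_eq)
  qed
  have perm: "p permutes (UNIV :: 'd set)"
  proof -
    have "surj p" using injp finite_UNIV_inj_surj[of p] by simp
    then show ?thesis unfolding permutes_univ using injp by (metis injD surjD)
  qed
  have "G' $ k $ j = G $ k $ (p j) * R $ p j $ j" for k j
  proof -
    have "G' $ k $ j = (\<Sum>i\<in>UNIV. G $ k $ i * R $ i $ j)"
      by (simp add: GR matrix_matrix_mult_def)
    also have "\<dots> = (\<Sum>i\<in>UNIV. if i = p j then G $ k $ i * R $ i $ j else 0)"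
      by (rule sum.cong) (auto simp: zero)
    also have "\<dots> = G $ k $ (p j) * R $ p j $ j" by (simp add: sum.delta')
    finally show ?thesis .
  qed
  then show ?thesis using perm pnz by (intro exI[of _ p] exI[of _ "\<lambda>j. R $ p j $ j"]) auto
qed



lemma Qlat_bil:
  "Qlat m \<Phi> B b \<Psi> (x0 + y0) (x1 + y1) - Qlat m \<Phi> B b \<Psi> x0 x1 - Qlat m \<Phi> B b \<Psi> y0 y1 =
   (\<Sum>i\<in>UNIV. (x0$i + x1$i * B$i$i) * (y0$i + y1$i * B$i$i) * \<Phi>$i$i + x1$i * y1$i * \<Psi>$i$i)"
  unfolding Qlat_def sum_subtractf[symmetric]
  by (rule sum.cong) (simp_all add: power2_eq_square field_simps)

definition dl :: "nat \<times> 'k \<Rightarrow> nat \<times> 'k \<Rightarrow> nat" where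
  "dl a = (\<lambda>z. if z = a then 1 else 0)"

lemma uj_add: "uj (\<lambda>z. f z + g z) t = uj f t + uj g t"
  by (simp add: uj_def vec_eq_iff)

lemma uj_dl: "uj (dl (s, k)) t = (if t = s then axis k 1 else 0)"
  by (simp add: uj_def dl_def vec_eq_iff axis_def)

lemma GT_axis: "(transpose \<Gamma> *v axis k 1) $ i = \<Gamma> $ k $ i"
  by (simp add: matrix_vector_mult_def transpose_def axis_def if_distrib if_distribR sum.delta' cong: if_cong)

lemma VM_axis: "(axis k (1::real) v* \<Gamma>) $ i = \<Gamma> $ k $ i"
  by (simp add: vector_matrix_mult_def axis_def if_distrib if_distribR sum.delta cong: if_cong)

definition qf where
  "qf m \<Phi> B b \<Psi> \<Gamma> j = Qlat m \<Phi> B b \<Psi> (transpose \<Gamma> *v uj j 0) (transpose \<Gamma> *v uj j 1)"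

lemma qf_bil:
  "qf m \<Phi> B b \<Psi> \<Gamma> (\<lambda>z. dl a z + dl a' z) - qf m \<Phi> B b \<Psi> \<Gamma> (dl a) - qf m \<Phi> B b \<Psi> \<Gamma> (dl a') =
   (\<Sum>i\<in>UNIV. ((transpose \<Gamma> *v uj (dl a) 0)$i + (transpose \<Gamma> *v uj (dl a) 1)$i * B$i$i) *
               ((transpose \<Gamma> *v uj (dl a') 0)$i + (transpose \<Gamma> *v uj (dl a') 1)$i * B$i$i) * \<Phi>$i$i
             + (transpose \<Gamma> *v uj (dl a) 1)$i * (transpose \<Gamma> *v uj (dl a') 1)$i * \<Psi>$i$i)"
  unfolding qf_def uj_add matrix_vector_right_distrib by (rule Qlat_bil)

lemma qf_E1: "qf m \<Phi> B b \<Psi> \<Gamma> (\<lambda>z. dl (0,k) z + dl (0,l) z) - qf m \<Phi> B b \<Psi> \<Gamma> (dl (0,k)) - qf m \<Phi> B b \<Psi> \<Gamma> (dl (0,l)) =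
   (\<Sum>i\<in>UNIV. \<Gamma>$k$i * \<Phi>$i$i * \<Gamma>$l$i)"
  unfolding qf_bil by (simp add: uj_dl GT_axis VM_axis mult_ac)

lemma qf_E2: "qf m \<Phi> B b \<Psi> \<Gamma> (\<lambda>z. dl (0,k) z + dl (1,l) z) - qf m \<Phi> B b \<Psi> \<Gamma> (dl (0,k)) - qf m \<Phi> B b \<Psi> \<Gamma> (dl (1,l)) =
   (\<Sum>i\<in>UNIV. \<Gamma>$k$i * (B$i$i * \<Phi>$i$i) * \<Gamma>$l$i)"
  unfolding qf_bil by (simp add: uj_dl GT_axis VM_axis mult_ac)

lemma entry_GDG:
  fixes G :: "real^'d::finite^'k::finite"
  shows "(G ** dg v ** transpose G) $ k $ l = (\<Sum>i\<in>UNIV. G$k$i * v i * G$l$i)"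
proof -
  have "(A ** transpose G) $ k $ l = (\<Sum>i\<in>UNIV. A$k$i * G$l$i)" for A :: "real^'d^'k"
    by (simp add: matrix_matrix_mult_def transpose_def)
  then show ?thesis by (simp add: dg_right)
qed

lemma matrix_inv_dg:
  assumes "\<And>i. c i \<noteq> 0"
  shows "matrix_inv (dg (\<lambda>i. 1 / c i)) = dg c" and "invertible (dg (\<lambda>i. 1 / c i))"
proof -
  have nz: "\<And>i. 1 / c i \<noteq> 0" using assms by simp
  have a: "dg (\<lambda>i. 1 / c i) ** dg c = mat 1" "dg c ** dg (\<lambda>i. 1 / c i) = mat 1"
    using dg_inv'[of c, OF assms] dg_inv[of c, OF assms] by auto
  then show inv: "invertible (dg (\<lambda>i. 1 / c i))" unfolding invertible_def by blast
  let ?D = "dg (\<lambda>i. 1 / c i)"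
  have M: "?D ** matrix_inv ?D = mat 1 \<and> matrix_inv ?D ** ?D = mat 1"
    unfolding matrix_inv_def by (rule someI[of _ "dg c"]) (use a in auto)
  have "matrix_inv ?D = matrix_inv ?D ** (?D ** dg c)" by (simp add: a)
  also have "\<dots> = dg c" by (simp add: matrix_mul_assoc M)
  finally show "matrix_inv ?D = dg c" .
qed



theorem mainTheorem5:
  fixes T :: nat
    and m m' b b' :: "real^'d"
    and \<Phi> \<Phi>' B B' \<Psi> \<Psi>' :: "real^'d^'d"
    and \<Gamma> \<Gamma>' :: "real^'d^'k"
  assumes "CARD('d) \<le> CARD('k)"
    and "T \<ge> 2"
    and "ARPLN_params m \<Phi> B b \<Psi>"
    and "ARPLN_params m' \<Phi>' B' b' \<Psi>'"
    and "rank \<Gamma> = CARD('d)" and "rank \<Gamma>' = CARD('d)"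
    and "\<forall>i. B $ i $ i \<noteq> 0" and "\<forall>i j. i \<noteq> j \<longrightarrow> B $ i $ i \<noteq> B $ j $ j"
    and "\<forall>i. B' $ i $ i \<noteq> 0" and "\<forall>i j. i \<noteq> j \<longrightarrow> B' $ i $ i \<noteq> B' $ j $ j"
    and "\<forall>y. obs_prob T m \<Phi> B b \<Psi> \<Gamma> y = obs_prob T m' \<Phi>' B' b' \<Psi>' \<Gamma>' y"
  shows "\<exists>P D. is_perm_matrix P \<and> is_diag D \<and> invertible D \<and>
           \<Gamma>' = \<Gamma> ** P ** matrix_inv D"
proof -
  note T = assms(2)
  have \<Phi>: "\<And>i. 0 < \<Phi> $ i $ i" and \<Psi>: "\<And>i. 0 < \<Psi> $ i $ i"
    using assms(3) by (auto simp: ARPLN_params_def)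
  have \<Phi>': "\<And>i. 0 < \<Phi>' $ i $ i" and \<Psi>': "\<And>i. 0 < \<Psi>' $ i $ i"
    using assms(4) by (auto simp: ARPLN_params_def)
  have injG: "inj ((*v) \<Gamma>)" using assms(5) full_rank_injective by blast
  have injG': "inj ((*v) \<Gamma>')" using assms(6) full_rank_injective by blast
  have injB: "inj (\<lambda>i. B $ i $ i)" using assms(8) by (auto simp: inj_def)
  have injB': "inj (\<lambda>i. B' $ i $ i)" using assms(10) by (auto simp: inj_def)
  have qeq: "qf m \<Phi> B b \<Psi> \<Gamma> j = qf m' \<Phi>' B' b' \<Psi>' \<Gamma>' j"
    if j0: "\<And>t k. 2 \<le> t \<Longrightarrow> j (t, k) = 0" for j :: "nat \<times> 'k \<Rightarrow> nat"
  proof -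
    have "Mom T m \<Phi> B b \<Psi> \<Gamma> j = Mom T m' \<Phi>' B' b' \<Psi>' \<Gamma>' j"
      unfolding Mom_def using assms(11) by simp
    then have "ennreal (exp (qf m \<Phi> B b \<Psi> \<Gamma> j)) = ennreal (exp (qf m' \<Phi>' B' b' \<Psi>' \<Gamma>' j))"
      unfolding qf_def using Mom_eq[of T j, OF T j0 \<Phi> \<Psi>] Mom_eq[of T j, OF T j0 \<Phi>' \<Psi>'] by simp
    then show ?thesis by simp
  qed
  have h1: "\<Gamma> ** dg (\<lambda>i. \<Phi> $ i $ i) ** transpose \<Gamma> = \<Gamma>' ** dg (\<lambda>i. \<Phi>' $ i $ i) ** transpose \<Gamma>'"
  proof -
    have "(\<Sum>i\<in>UNIV. \<Gamma>$k$i * \<Phi>$i$i * \<Gamma>$l$i) = (\<Sum>i\<in>UNIV. \<Gamma>'$k$i * \<Phi>'$i$i * \<Gamma>'$l$i)" for k l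
    proof -
      have "qf m \<Phi> B b \<Psi> \<Gamma> (\<lambda>z. dl (0,k) z + dl (0,l) z) = qf m' \<Phi>' B' b' \<Psi>' \<Gamma>' (\<lambda>z. dl (0,k) z + dl (0,l) z)"
        "qf m \<Phi> B b \<Psi> \<Gamma> (dl (0,k)) = qf m' \<Phi>' B' b' \<Psi>' \<Gamma>' (dl (0,k))"
        "qf m \<Phi> B b \<Psi> \<Gamma> (dl (0,l)) = qf m' \<Phi>' B' b' \<Psi>' \<Gamma>' (dl (0,l))"
        by (rule qeq, simp add: dl_def)+
      then show ?thesis using qf_E1[of m \<Phi> B b \<Psi> \<Gamma> k l] qf_E1[of m' \<Phi>' B' b' \<Psi>' \<Gamma>' k l] by linarith
    qed
    then show ?thesis by (simp add: vec_eq_iff entry_GDG)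
  qed
  have h2: "\<Gamma> ** dg (\<lambda>i. B $ i $ i * \<Phi> $ i $ i) ** transpose \<Gamma> = \<Gamma>' ** dg (\<lambda>i. B' $ i $ i * \<Phi>' $ i $ i) ** transpose \<Gamma>'"
  proof -
    have "(\<Sum>i\<in>UNIV. \<Gamma>$k$i * (B$i$i * \<Phi>$i$i) * \<Gamma>$l$i) = (\<Sum>i\<in>UNIV. \<Gamma>'$k$i * (B'$i$i * \<Phi>'$i$i) * \<Gamma>'$l$i)" for k l
    proof -
      have "qf m \<Phi> B b \<Psi> \<Gamma> (\<lambda>z. dl (0,k) z + dl (1,l) z) = qf m' \<Phi>' B' b' \<Psi>' \<Gamma>' (\<lambda>z. dl (0,k) z + dl (1,l) z)"
        "qf m \<Phi> B b \<Psi> \<Gamma> (dl (0,k)) = qf m' \<Phi>' B' b' \<Psi>' \<Gamma>' (dl (0,k))"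
        "qf m \<Phi> B b \<Psi> \<Gamma> (dl (1,l)) = qf m' \<Phi>' B' b' \<Psi>' \<Gamma>' (dl (1,l))"
        by (rule qeq, simp add: dl_def)+
      then show ?thesis using qf_E2[of m \<Phi> B b \<Psi> \<Gamma> k l] qf_E2[of m' \<Phi>' B' b' \<Psi>' \<Gamma>' k l] by linarith
    qed
    then show ?thesis by (simp add: vec_eq_iff entry_GDG)
  qed
  obtain p c where p: "p permutes (UNIV :: 'd set)" and c: "\<And>j. c j \<noteq> 0"
    and G': "\<And>k j. \<Gamma>' $ k $ j = \<Gamma> $ k $ (p j) * c j"
    using linalg[OF injG injG' \<Phi> \<Phi>' injB injB' h1 h2] by blast
  define P :: "real^'d^'d" where "P = (\<chi> i j. if i = p j then 1 else 0)"
  define D where "D = dg (\<lambda>i. 1 / c i)"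
  have "is_perm_matrix P" unfolding is_perm_matrix_def P_def using p by blast
  moreover have "is_diag D" unfolding is_diag_def D_def dg_def by simp
  moreover have "invertible D" unfolding D_def by (rule matrix_inv_dg(2)[OF c])
  moreover have "\<Gamma>' = \<Gamma> ** P ** matrix_inv D"
  proof -
    have "(\<Gamma> ** P) $ k $ j = \<Gamma> $ k $ (p j)" for k j
      by (simp add: P_def matrix_matrix_mult_def if_distrib if_distribR sum.delta cong: if_cong)
    then show ?thesis
      unfolding D_def matrix_inv_dg(1)[OF c] by (simp add: vec_eq_iff dg_right G')
  qed
  ultimately show ?thesis by blast
qed


end
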